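(* Let $X_1, X_2,\ldots$ be an exchangeable sequence of Bernoulli random variables, fix $k\in\mathbb N$, $e_1,\ldots,e_k\in\{0,1\}$, $\alpha=\sum_{j=1}^k e_j$, and $N\in{}^*\mathbb N\setminus\mathbb N$, and let $Y_N=\frac{X_1+\cdots+X_N}{N}$. If $\mathbb P(X_1=e_1,\ldots,X_k=e_k)=0$, then $$\sum_{i = 0}^N {}^*\mathbb{P}\left(X_1 = e_1, \ldots, X_k = e_k \,\Big\vert\, Y_N = \tfrac{i}{N}\right) {}^*\mathbb{P}\left(Y_N = \tfrac{i}{N}\right) \approx \sum_{i = 0}^N \left(\tfrac{i}{N} \right)^{\alpha} \left(1 - \tfrac{i}{N} \right)^{k - \alpha} {}^*\mathbb{P}\left(Y_N = \tfrac{i}{N}\right),$$ where a term whose conditioning event has probability zero is taken to be $0$.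
   Context: Bernoulli means $\{0,1\}$-valued; exchangeable means every finite subcollection has the same joint law as any permutation of it. Work in a sufficiently saturated nonstandard extension; ${}^*\mathbb P$ extends $\mathbb P$, $X_1,\ldots,X_N$ are the first $N$ terms of the extended sequence. $x\approx y$ means $x-y$ is infinitesimal. *)

theory Defs
  imports "HOL-Probability.Probability"
begin

definition exchangeable :: "'a measure \<Rightarrow> (nat \<Rightarrow> 'a \<Rightarrow> real) \<Rightarrow> bool" where
  "exchangeable M X \<longleftrightarrow>
     (\<forall>S p. finite S \<and> S \<subseteq> {1..} \<and> p permutes S \<longrightarrow>
        distr M (PiM S (\<lambda>_. borel)) (\<lambda>\<omega>. restrict (\<lambda>i. X i \<omega>) S) =
        distr M (PiM S (\<lambda>_. borel)) (\<lambda>\<omega>. restrict (\<lambda>i. X (p i) \<omega>) S))"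

definition cond_prob :: "'a measure \<Rightarrow> 'a set \<Rightarrow> 'a set \<Rightarrow> real" where
  "cond_prob M A B = (if measure M B = 0 then 0 else measure M (A \<inter> B) / measure M B)"

definition avgY :: "(nat \<Rightarrow> 'a \<Rightarrow> real) \<Rightarrow> nat \<Rightarrow> 'a \<Rightarrow> real" where
  "avgY X N \<omega> = (\<Sum>j=1..N. X j \<omega>) / real N"

end

theory Submission
  imports Defs
begin

lemma perm_ext:
  fixes j :: "nat \<Rightarrow> nat"
  assumes fS: "finite S" and AS: "A \<subseteq> S" and jS: "j ` A \<subseteq> S" and inj: "inj_on j A"
  shows "\<exists>p. p permutes S \<and> (\<forall>x\<in>A. p x = j x)"
proof -
  have fA: "finite A" using fS AS by (rule finite_subset[rotated])
  have cA: "card (j ` A) = card A" using inj by (rule card_image)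
  have c1: "card (S - A) = card S - card A" using AS fA by (rule card_Diff_subset[rotated])
  have fjA: "finite (j ` A)" using fA by (rule finite_imageI)
  have c2: "card (S - j ` A) = card S - card (j ` A)" using jS fjA by (rule card_Diff_subset[rotated])
  have ceq: "card (S - A) = card (S - j ` A)" unfolding c1 c2 cA ..
  have "\<exists>g. bij_betw g (S - A) (S - j ` A)"
    by (rule finite_same_card_bij[OF finite_Diff[OF fS] finite_Diff[OF fS] ceq])
  then obtain g where g: "bij_betw g (S - A) (S - j ` A)" by (elim exE)
  define p where "p x = (if x \<in> A then j x else if x \<in> S then g x else x)" for x
  have bj: "bij_betw j A (j ` A)" using inj by (rule inj_on_imp_bij_betw)
  have "bij_betw p A (j ` A) = bij_betw j A (j ` A)"
    by (rule bij_betw_cong) (simp add: p_def)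
  with bj have b1: "bij_betw p A (j ` A)" by (rule iffD2[rotated])
  have "bij_betw p (S - A) (S - j ` A) = bij_betw g (S - A) (S - j ` A)"
    by (rule bij_betw_cong) (simp add: p_def)
  with g have b2: "bij_betw p (S - A) (S - j ` A)" by (rule iffD2[rotated])
  have dis: "j ` A \<inter> (S - j ` A) = {}" by blast
  have b3: "bij_betw p (A \<union> (S - A)) (j ` A \<union> (S - j ` A))"
    by (rule bij_betw_combine[OF b1 b2 dis])
  have e1: "A \<union> (S - A) = S" using AS by blast
  have e2: "j ` A \<union> (S - j ` A) = S" using jS by blast
  have bS: "bij_betw p S S" using b3 unfolding e1 e2 .
  have pfix: "\<And>x. x \<notin> S \<Longrightarrow> p x = x" using AS unfolding p_def by auto
  have "p permutes S" using bS pfix by (rule bij_imp_permutes)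
  moreover have "\<forall>x\<in>A. p x = j x" unfolding p_def by simp
  ultimately show ?thesis by blast
qed

lemma sum_e_le: "(\<And>m. m \<in> {1..k} \<Longrightarrow> e m \<in> {0,1::nat}) \<Longrightarrow> (\<Sum>m=1..k. e m) \<le> k"
proof -
  assume a: "\<And>m. m \<in> {1..k} \<Longrightarrow> e m \<in> {0,1::nat}"
  have "(\<Sum>m=1..k. e m) \<le> (\<Sum>m=1..k. 1)" by (rule sum_mono) (use a in force)
  thus ?thesis by simp
qed

lemma prod_e:
  fixes a b :: nat
  shows "(\<And>m. m \<in> {1..k} \<Longrightarrow> e m \<in> {0,1::nat}) \<Longrightarrow>
    (\<Prod>m=1..k. if e m = 1 then a else b) = a ^ (\<Sum>m=1..k. e m) * b ^ (k - (\<Sum>m=1..k. e m))"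
proof (induction k)
  case 0 then show ?case by simp
next
  case (Suc k)
  have IH: "(\<Prod>m=1..k. if e m = 1 then a else b) = a ^ (\<Sum>m=1..k. e m) * b ^ (k - (\<Sum>m=1..k. e m))"
    by (rule Suc.IH) (rule Suc.prems, simp)
  have le: "(\<Sum>m=1..k. e m) \<le> k" by (rule sum_e_le) (use Suc.prems in auto)
  have ek: "e (Suc k) \<in> {0,1}" using Suc.prems by auto
  define s where "s = (\<Sum>m=1..k. e m)"
  define P where "P = (\<Prod>m=1..k. if e m = 1 then a else b)"
  have IH': "P = a ^ s * b ^ (k - s)" using IH by (simp only: P_def s_def)
  have le': "s \<le> k" using le by (simp only: s_def)
  have sS: "(\<Sum>m=1..Suc k. e m) = s + e (Suc k)" by (simp add: s_def)
  have pS: "(\<Prod>m=1..Suc k. if e m = 1 then a else b) = P * (if e (Suc k) = 1 then a else b)"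
    by (simp add: P_def)
  show ?case
  proof (cases "e (Suc k) = 1")
    case True
    have "a ^ s * b ^ (k - s) * a = a ^ (s + 1) * b ^ (Suc k - (s + 1))"
      by (simp add: mult_ac)
    then show ?thesis unfolding sS pS IH' using True by simp
  next
    case False
    then have e0: "e (Suc k) = 0" using ek by auto
    have "a ^ s * b ^ (k - s) * b = a ^ s * b ^ (Suc k - s)"
      using le' by (simp add: Suc_diff_le mult_ac)
    then show ?thesis unfolding sS pS IH' using e0 by simp
  qed
qed


lemma exch_event:
  fixes M :: "'a measure" and X :: "nat \<Rightarrow> 'a \<Rightarrow> real" and j :: "nat \<Rightarrow> nat"
  assumes meas: "\<And>i. i \<ge> 1 \<Longrightarrow> X i \<in> borel_measurable M"
    and ex: "exchangeable M X" and inj: "inj_on j {1..k}" and jr: "j ` {1..k} \<subseteq> {1..}"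
  shows "measure M {\<omega> \<in> space M. \<forall>m\<in>{1..k}. X (j m) \<omega> = c m}
       = measure M {\<omega> \<in> space M. \<forall>m\<in>{1..k}. X m \<omega> = c m}"
proof -
  define S where "S = {1..k} \<union> j ` {1..k}"
  have fS: "finite S" and S1: "S \<subseteq> {1..}" using jr by (auto simp: S_def)
  obtain p where p: "p permutes S" and pj: "\<forall>x\<in>{1..k}. p x = j x"
    using perm_ext[OF fS _ _ inj] by (auto simp: S_def)
  have eq: "distr M (PiM S (\<lambda>_. borel)) (\<lambda>\<omega>. restrict (\<lambda>i. X i \<omega>) S) =
        distr M (PiM S (\<lambda>_. borel)) (\<lambda>\<omega>. restrict (\<lambda>i. X (p i) \<omega>) S)"
    using ex fS S1 p unfolding exchangeable_def by blast
  define C where "C = Pi\<^sub>E S (\<lambda>i. if i \<in> {1..k} then {c i} else (UNIV :: real set))"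
  have Cs: "C \<in> sets (PiM S (\<lambda>_. borel))"
    unfolding C_def by (rule sets_PiM_I_finite[OF fS]) auto
  have m1: "(\<lambda>\<omega>. restrict (\<lambda>i. X i \<omega>) S) \<in> measurable M (PiM S (\<lambda>_. borel))"
    by (rule measurable_restrict) (use meas S1 in auto)
  have m2: "(\<lambda>\<omega>. restrict (\<lambda>i. X (p i) \<omega>) S) \<in> measurable M (PiM S (\<lambda>_. borel))"
  proof (rule measurable_restrict)
    fix i assume "i \<in> S"
    then have "p i \<in> S" using p by (simp add: permutes_in_image)
    then show "(\<lambda>\<omega>. X (p i) \<omega>) \<in> borel_measurable M" using meas S1 by auto
  qed
  have memC: "restrict g S \<in> C \<longleftrightarrow> (\<forall>m\<in>{1..k}. g m = c m)" for g :: "nat \<Rightarrow> real"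
  proof
    assume H: "restrict g S \<in> C"
    show "\<forall>m\<in>{1..k}. g m = c m"
    proof
      fix m assume m: "m \<in> {1..k}"
      then have mS: "m \<in> S" by (simp add: S_def)
      from H mS have "restrict g S m \<in> (if m \<in> {1..k} then {c m} else UNIV)"
        unfolding C_def by (rule PiE_mem)
      then show "g m = c m" using m mS by simp
    qed
  next
    assume H: "\<forall>m\<in>{1..k}. g m = c m"
    show "restrict g S \<in> C" unfolding C_def
      by (rule PiE_I) (use H in simp_all)
  qed
  have pre1: "(\<lambda>\<omega>. restrict (\<lambda>i. X i \<omega>) S) -` C \<inter> space M
      = {\<omega> \<in> space M. \<forall>m\<in>{1..k}. X m \<omega> = c m}"
  proof (rule set_eqI)
    fix \<omega> show "\<omega> \<in> (\<lambda>\<omega>. restrict (\<lambda>i. X i \<omega>) S) -` C \<inter> space M \<longleftrightarrow> \<omega> \<in> {\<omega> \<in> space M. \<forall>m\<in>{1..k}. X m \<omega> = c m}"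
      using memC[of "\<lambda>i. X i \<omega>"] by auto
  qed
  have pre2: "(\<lambda>\<omega>. restrict (\<lambda>i. X (p i) \<omega>) S) -` C \<inter> space M
      = {\<omega> \<in> space M. \<forall>m\<in>{1..k}. X (j m) \<omega> = c m}"
  proof (rule set_eqI)
    fix \<omega> show "\<omega> \<in> (\<lambda>\<omega>. restrict (\<lambda>i. X (p i) \<omega>) S) -` C \<inter> space M \<longleftrightarrow> \<omega> \<in> {\<omega> \<in> space M. \<forall>m\<in>{1..k}. X (j m) \<omega> = c m}"
      using memC[of "\<lambda>i. X (p i) \<omega>"] pj by auto
  qed
  have "measure (distr M (PiM S (\<lambda>_. borel)) (\<lambda>\<omega>. restrict (\<lambda>i. X i \<omega>) S)) C =
        measure (distr M (PiM S (\<lambda>_. borel)) (\<lambda>\<omega>. restrict (\<lambda>i. X (p i) \<omega>) S)) C"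
    by (simp only: eq)
  then show ?thesis
    unfolding measure_distr[OF m1 Cs] measure_distr[OF m2 Cs] pre1 pre2 by (rule sym)
qed

lemma eq_sets: "g \<in> borel_measurable M \<Longrightarrow> {\<omega> \<in> space M. g \<omega> = (c::real)} \<in> sets M"
proof -
  assume g: "g \<in> borel_measurable M"
  have "{\<omega> \<in> space M. g \<omega> = c} = g -` {c} \<inter> space M" by auto
  also have "\<dots> \<in> sets M" by (rule measurable_sets[OF g]) simp
  finally show ?thesis .
qed

lemma ev_sets:
  assumes "\<And>m. m \<in> I \<Longrightarrow> Y m \<in> borel_measurable M" "finite I"
  shows "{\<omega> \<in> space M. \<forall>m\<in>I. Y m \<omega> = (c m :: real)} \<in> sets M"
  by (rule sets.sets_Collect_finite_All[OF _ assms(2)]) (use assms(1) eq_sets in blast)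

lemma sum_X:
  fixes X :: "nat \<Rightarrow> 'a \<Rightarrow> real"
  assumes "\<And>t. t \<in> {1..N} \<Longrightarrow> X t \<omega> \<in> {0, 1::real}"
  shows "(\<Sum>t=1..N. X t \<omega>) = real (card {t\<in>{1..N}. X t \<omega> = 1})"
proof -
  have "(\<Sum>t=1..N. X t \<omega>) = (\<Sum>t=1..N. if X t \<omega> = 1 then 1 else 0)"
    by (rule sum.cong) (use assms in auto)
  also have "\<dots> = real (card {t\<in>{1..N}. X t \<omega> = 1})"
    by (subst sum.inter_filter[of "{1..N}", symmetric]) simp_all
  finally show ?thesis .
qed

lemma count_tuples:
  fixes X :: "nat \<Rightarrow> 'a \<Rightarrow> real" and e :: "nat \<Rightarrow> nat"
  assumes X01: "\<And>t. t \<in> {1..N} \<Longrightarrow> X t \<omega> \<in> {0, 1}"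
    and e01: "\<And>m. m \<in> {1..k} \<Longrightarrow> e m \<in> {0, 1}"
  shows "card {j \<in> PiE {1..k} (\<lambda>_. {1..N}). \<forall>m\<in>{1..k}. X (j m) \<omega> = real (e m)}
     = card {t\<in>{1..N}. X t \<omega> = 1} ^ (\<Sum>m=1..k. e m)
       * (N - card {t\<in>{1..N}. X t \<omega> = 1}) ^ (k - (\<Sum>m=1..k. e m))"
proof -
  define n where "n = card {t\<in>{1..N}. X t \<omega> = 1}"
  define T where "T m = {t\<in>{1..N}. X t \<omega> = real (e m)}" for m
  have "{j \<in> PiE {1..k} (\<lambda>_. {1..N}). \<forall>m\<in>{1..k}. X (j m) \<omega> = real (e m)} = PiE {1..k} T"
    unfolding T_def by (auto simp: PiE_iff extensional_def)
  hence "card {j \<in> PiE {1..k} (\<lambda>_. {1..N}). \<forall>m\<in>{1..k}. X (j m) \<omega> = real (e m)}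
      = (\<Prod>m=1..k. card (T m))" by (simp add: card_PiE)
  also have "\<dots> = (\<Prod>m=1..k. if e m = 1 then n else N - n)"
  proof (rule prod.cong[OF refl])
    fix m assume m: "m \<in> {1..k}"
    show "card (T m) = (if e m = 1 then n else N - n)"
    proof (cases "e m = 1")
      case True then show ?thesis by (simp add: T_def n_def)
    next
      case False
      then have "e m = 0" using e01 m by auto
      have "T m = {1..N} - {t\<in>{1..N}. X t \<omega> = 1}"
      proof (rule set_eqI)
        fix t show "t \<in> T m \<longleftrightarrow> t \<in> {1..N} - {t\<in>{1..N}. X t \<omega> = 1}"
          using X01[of t] \<open>e m = 0\<close> by (cases "t \<in> {1..N}") (auto simp: T_def)
      qed
      moreover have "card ({1..N} - {t\<in>{1..N}. X t \<omega> = 1}) = N - card {t\<in>{1..N}. X t \<omega> = 1}"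
        by (subst card_Diff_subset) auto
      ultimately show ?thesis using False unfolding n_def by simp
    qed
  qed
  also have "\<dots> = n ^ (\<Sum>m=1..k. e m) * (N - n) ^ (k - (\<Sum>m=1..k. e m))"
    by (rule prod_e[OF e01])
  finally show ?thesis by (simp add: n_def)
qed

lemma lim_prod: "(\<lambda>N. 1 - (\<Prod>m<k. (1 - real m / real N))) \<longlonglongrightarrow> 0"
proof -
  have "(\<lambda>N. \<Prod>m<k. (1 - real m / real N)) \<longlonglongrightarrow> (\<Prod>m<k. (1 - 0::real))"
    by (intro tendsto_prod tendsto_diff tendsto_const lim_const_over_n)
  then have "(\<lambda>N. 1 - (\<Prod>m<k. (1 - real m / real N))) \<longlonglongrightarrow> 1 - 1"
    by (intro tendsto_diff tendsto_const) simp
  then show ?thesis by simp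
qed


theorem mainTheorem6:
  fixes M :: "'a measure" and X :: "nat \<Rightarrow> 'a \<Rightarrow> real"
    and k :: nat and e :: "nat \<Rightarrow> nat"
  assumes "prob_space M"
    and "\<And>i. i \<ge> 1 \<Longrightarrow> X i \<in> borel_measurable M"
    and "\<And>i \<omega>. i \<ge> 1 \<Longrightarrow> \<omega> \<in> space M \<Longrightarrow> X i \<omega> \<in> {0, 1}"
    and "exchangeable M X"
    and "\<And>j. j \<in> {1..k} \<Longrightarrow> e j \<in> {0, 1}"
    and "measure M {\<omega> \<in> space M. \<forall>j\<in>{1..k}. X j \<omega> = real (e j)} = 0"
  shows "(\<lambda>N. (\<Sum>i=0..N.
              cond_prob M {\<omega> \<in> space M. \<forall>j\<in>{1..k}. X j \<omega> = real (e j)}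
                          {\<omega> \<in> space M. avgY X N \<omega> = real i / real N}
            * measure M {\<omega> \<in> space M. avgY X N \<omega> = real i / real N})
         - (\<Sum>i=0..N. (real i / real N) ^ (\<Sum>j=1..k. e j)
                      * (1 - real i / real N) ^ (k - (\<Sum>j=1..k. e j))
            * measure M {\<omega> \<in> space M. avgY X N \<omega> = real i / real N}))
         \<longlonglongrightarrow> 0"
proof -
  interpret P: prob_space M by fact
  note Xm = assms(2) and X01 = assms(3) and e01 = assms(5)
  define A where "A = {\<omega> \<in> space M. \<forall>j\<in>{1..k}. X j \<omega> = real (e j)}"
  define B where "B N i = {\<omega> \<in> space M. avgY X N \<omega> = real i / real N}" for N i :: nat
  define \<alpha> where "\<alpha> = (\<Sum>j=1..k. e j)"
  define f where "f x = x ^ \<alpha> * (1 - x) ^ (k - \<alpha>)" for x :: real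
  define E where "E j = {\<omega> \<in> space M. \<forall>m\<in>{1..k}. X (j m) \<omega> = real (e m)}" for j :: "nat \<Rightarrow> nat"
  have A0: "measure M A = 0" using assms(6) by (simp add: A_def)
  have As: "A \<in> sets M" unfolding A_def
    by (rule ev_sets[where Y=X, OF _ finite_atLeastAtMost]) (rule Xm, simp)
  have avgm: "avgY X N \<in> borel_measurable M" for N
  proof -
    have "(\<lambda>\<omega>. \<Sum>j=1..N. X j \<omega>) \<in> borel_measurable M"
      by (rule borel_measurable_sum) (rule Xm, simp)
    then show ?thesis unfolding avgY_def[abs_def]
      by (rule borel_measurable_divide[OF _ borel_measurable_const])
  qed
  have Bs: "B N i \<in> sets M" for N i unfolding B_def by (rule eq_sets[OF avgm])
  have Es: "E j \<in> sets M" if "j ` {1..k} \<subseteq> {1..}" for j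
  proof -
    have jm: "\<And>m. m \<in> {1..k} \<Longrightarrow> j m \<ge> 1" using that by (auto simp: image_subset_iff)
    show ?thesis unfolding E_def
      by (rule ev_sets[where Y="\<lambda>m. X (j m)", OF _ finite_atLeastAtMost]) (rule Xm, erule jm)
  qed
  have first: "(\<Sum>i=0..N. cond_prob M A (B N i) * measure M (B N i)) = 0" for N
  proof (rule sum.neutral, rule ballI)
    fix i
    have "measure M (A \<inter> B N i) \<le> measure M A" by (rule P.finite_measure_mono[OF _ As]) auto
    then have "measure M (A \<inter> B N i) = 0" using A0 measure_nonneg[of M "A \<inter> B N i"] by linarith
    then show "cond_prob M A (B N i) * measure M (B N i) = 0" by (simp add: cond_prob_def)
  qed
  define T where "T N = (\<Sum>i=0..N. f (real i / real N) * measure M (B N i))" for N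
  have T_nonneg: "T N \<ge> 0" for N
    unfolding T_def
  proof (rule sum_nonneg)
    fix i assume i: "i \<in> {0..N}"
    have x0: "0 \<le> real i / real N" by simp
    have x1: "real i / real N \<le> 1"
    proof (cases "N = 0")
      case True then show ?thesis by simp
    next
      case False then show ?thesis using i by (simp add: divide_le_eq_1)
    qed
    have "0 \<le> f (real i / real N)" unfolding f_def
      by (rule mult_nonneg_nonneg; rule zero_le_power) (use x0 x1 in simp_all)
    then show "0 \<le> f (real i / real N) * measure M (B N i)" by simp
  qed
  have T_le: "T N \<le> 1 - (\<Prod>m<k. (1 - real m / real N))" if N1: "N \<ge> 1" and Nk: "N \<ge> k" for N
  proof -
    define J where "J = PiE {1..k} (\<lambda>_. {1..N::nat})"
    have fJ: "finite J" by (simp add: J_def finite_PiE)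
    have Jr: "j ` {1..k} \<subseteq> {1..}" if "j \<in> J" for j using that by (auto simp: J_def PiE_iff)
    have point: "(\<Sum>i=0..N. f (real i / real N) * indicator (B N i) \<omega>)
        = (\<Sum>j\<in>J. indicator (E j) \<omega>) / real N ^ k" if \<omega>: "\<omega> \<in> space M" for \<omega>
    proof -
      define n where "n = card {t\<in>{1..N}. X t \<omega> = 1}"
      have nN: "n \<le> N" unfolding n_def by (rule order_trans[OF card_mono[of "{1..N}"]]) auto
      have X01': "\<And>t. t \<in> {1..N} \<Longrightarrow> X t \<omega> \<in> {0, 1}" using X01 \<omega> by auto
      have avg: "avgY X N \<omega> = real n / real N"
        unfolding avgY_def n_def using sum_X[of N X \<omega>, OF X01'] by simp
      have inB: "\<omega> \<in> B N i \<longleftrightarrow> i = n" for i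
        using N1 \<omega> by (auto simp: B_def avg)
      have "(\<Sum>i=0..N. f (real i / real N) * indicator (B N i) \<omega>)
          = (\<Sum>i=0..N. if i = n then f (real n / real N) else 0)"
        by (rule sum.cong) (auto simp: inB indicator_def)
      also have "\<dots> = f (real n / real N)" using nN by simp
      also have "\<dots> = real (n ^ \<alpha> * (N - n) ^ (k - \<alpha>)) / real N ^ k"
      proof -
        have ak: "\<alpha> \<le> k" unfolding \<alpha>_def by (rule sum_e_le[OF e01])
        have "1 - real n / real N = real (N - n) / real N" using nN N1 by (simp add: field_simps of_nat_diff)
        then have "f (real n / real N) = real n ^ \<alpha> * real (N - n) ^ (k - \<alpha>) / (real N ^ \<alpha> * real N ^ (k - \<alpha>))"
          by (simp add: f_def power_divide)
        also have "real N ^ \<alpha> * real N ^ (k - \<alpha>) = real N ^ k" using ak by (simp add: power_add[symmetric])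
        finally show ?thesis by simp
      qed
      also have "real (n ^ \<alpha> * (N - n) ^ (k - \<alpha>)) = (\<Sum>j\<in>J. indicator (E j) \<omega>)"
      proof -
        have "(\<Sum>j\<in>J. indicator (E j) \<omega> :: real) = (\<Sum>j\<in>J. if \<forall>m\<in>{1..k}. X (j m) \<omega> = real (e m) then 1 else 0)"
          by (rule sum.cong) (use \<omega> in \<open>auto simp: indicator_def E_def\<close>)
        also have "\<dots> = real (card {j \<in> J. \<forall>m\<in>{1..k}. X (j m) \<omega> = real (e m)})"
          using fJ by (simp add: sum.If_cases Int_def conj_commute)
        also have "\<dots> = real (n ^ \<alpha> * (N - n) ^ (k - \<alpha>))"
          unfolding J_def n_def \<alpha>_def by (subst count_tuples[of N X \<omega> k e, OF X01' e01]) auto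
        finally show ?thesis by simp
      qed
      finally show ?thesis .
    qed
    have intB: "integrable M (\<lambda>\<omega>. f (real i / real N) * indicat_real (B N i) \<omega>)" for i
      by (rule integrable_mult_right) (simp add: Bs P.emeasure_eq_measure)
    have intE: "integrable M (indicat_real (E j))" if "j \<in> J" for j
      using Es[OF Jr[OF that]] by (simp add: P.emeasure_eq_measure)
    have Bsp: "B N i \<inter> space M = B N i" for i by (auto simp: B_def)
    have Esp: "E j \<inter> space M = E j" for j by (auto simp: E_def)
    have "T N = integral\<^sup>L M (\<lambda>\<omega>. \<Sum>i=0..N. f (real i / real N) * indicator (B N i) \<omega>)"
      unfolding T_def by (simp only: Bochner_Integration.integral_sum[OF intB] integral_mult_right_zero Bochner_Integration.integral_indicator Bsp)
    also have "\<dots> = integral\<^sup>L M (\<lambda>\<omega>. (\<Sum>j\<in>J. indicator (E j) \<omega>) / real N ^ k)"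
      by (rule Bochner_Integration.integral_cong[OF refl]) (rule point)
    also have "\<dots> = (\<Sum>j\<in>J. measure M (E j)) / real N ^ k"
      by (simp only: integral_divide_zero Bochner_Integration.integral_sum[OF intE] Bochner_Integration.integral_indicator Esp)
    also have "\<dots> \<le> (\<Sum>j\<in>J. if inj_on j {1..k} then 0 else 1) / real N ^ k"
    proof (intro divide_right_mono sum_mono)
      fix j assume j: "j \<in> J"
      show "measure M (E j) \<le> (if inj_on j {1..k} then 0 else 1)"
      proof (cases "inj_on j {1..k}")
        case True
        have "measure M (E j) = measure M A"
          unfolding E_def A_def by (rule exch_event[OF Xm assms(4) True Jr[OF j]])
        then show ?thesis using True A0 by simp
      next
        case False then show ?thesis by (simp add: P.prob_le_1)
      qed
    qed simp
    also have "(\<Sum>j\<in>J. if inj_on j {1..k} then 0 else 1) = real (card J) - real (card {j\<in>J. inj_on j {1..k}})"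
    proof -
      have "real (card J) = (\<Sum>j\<in>J. (1::real))" by simp
      also have "\<dots> = (\<Sum>j\<in>J. (if inj_on j {1..k} then 1 else 0) + (if inj_on j {1..k} then 0 else 1))"
        by (rule sum.cong) auto
      also have "\<dots> = real (card {j\<in>J. inj_on j {1..k}}) + (\<Sum>j\<in>J. if inj_on j {1..k} then 0 else 1)"
        using fJ by (simp add: sum.distrib sum.If_cases Int_def conj_commute)
      finally show ?thesis by simp
    qed
    also have "card J = N ^ k" by (simp add: J_def card_PiE)
    also have "card {j\<in>J. inj_on j {1..k}} = (\<Prod>m\<in>{0..<k}. N - m)"
      unfolding J_def using card_inj_on_subset_funcset[of "{1..k}" "{1..N}" "{1..k}"] by simp
    also have "(real (N ^ k) - real (\<Prod>m\<in>{0..<k}. N - m)) / real N ^ k = 1 - (\<Prod>m<k. (1 - real m / real N))"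
    proof -
      have "real (\<Prod>m\<in>{0..<k}. N - m) / real N ^ k = (\<Prod>m<k. real (N - m) / real N)"
        by (simp add: of_nat_prod prod_dividef atLeast0LessThan)
      also have "\<dots> = (\<Prod>m<k. (1 - real m / real N))"
        by (rule prod.cong[OF refl]) (use N1 Nk in \<open>auto simp: of_nat_diff field_simps\<close>)
      finally show ?thesis using N1 by (simp add: diff_divide_distrib)
    qed
    finally show ?thesis .
  qed
  have "T \<longlonglongrightarrow> 0"
  proof (rule tendsto_sandwich[OF _ _ tendsto_const lim_prod])
    show "\<forall>\<^sub>F N in sequentially. 0 \<le> T N" using T_nonneg by simp
    show "\<forall>\<^sub>F N in sequentially. T N \<le> 1 - (\<Prod>m<k. (1 - real m / real N))"
      using eventually_ge_at_top[of "Suc k"] by eventually_elim (rule T_le, auto)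
  qed
  then have "(\<lambda>N. (\<Sum>i=0..N. cond_prob M A (B N i) * measure M (B N i)) - T N) \<longlonglongrightarrow> 0 - 0"
    unfolding first by (rule tendsto_diff[OF tendsto_const])
  then show ?thesis unfolding T_def f_def \<alpha>_def A_def B_def diff_self .
qed

end
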